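(* For every probability vector $p=(p_1,\dots,p_I)\in\mathbb R^I$ with all entries positive, the system-wide safety staffing parameter $\vartheta_p$ is given, for every $i\in\mathcal I$, by $$\vartheta_p=\frac{\sum_{j\in\mathcal J}\mathfrak d(i,j)\,\theta_j-\sum_{\ell\in\mathcal I}\mathfrak d(i,\ell)\,\hat\lambda_\ell}{\sum_{\ell\in\mathcal I}\mathfrak d(i,\ell)\,p_\ell}.$$ (In particular the right-hand side does not depend on $i$.)
   Context: Network and parameters: $\mathcal I=\{1,\dots,I\}$ (customer classes), $\mathcal J=\{1,\dots,J\}$ (server pools), and $\mathcal E\subset\mathcal I\times\mathcal J$ is a set of edges such that the bipartite graph $\mathcal G=(\mathcal I\cup\mathcal J,\mathcal E)$ is a tree. Write $i\sim j$ iff $(i,j)\in\mathcal E$, $\mathcal J(i)=\{j:i\sim j\}$, $\mathcal I(j)=\{i:i\sim j\}$. $\mathbb R^{\mathcal G}$ denotes the arrays $[\xi_{ij}]\in\mathbb R^{I\times J}$ with $\xi_{ij}=0$ whenever $i\not\sim j$, and $\mathbb R^{\mathcal G}_+$ its elements with nonnegative entries. For each $n\in\mathbb N$ there are arrival rates $\lambda^n_i>0$, service rates $\mu^n_{ij}>0$ ($i\sim j$) and pool sizes $N^n_j\in\mathbb N$, such that as $n\to\infty$: $\lambda^n_i/n\to\lambda_i>0$, $N^n_j/n\to\nu_j>0$, $\mu^n_{ij}\to\mu_{ij}>0$, $\hat\lambda^n_i:=(\lambda^n_i-n\lambda_i)/\sqrt n\to\hat\lambda_i\in\mathbb R$, $\hat\mu^n_{ij}:=\sqrt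 n(\mu^n_{ij}-\mu_{ij})\to\hat\mu_{ij}\in\mathbb R$, $\hat\nu^n_j:=\sqrt n(N^n_j/n-\nu_j)\to\hat\nu_j\in\mathbb R$. Complete resource pooling is assumed: the linear program "minimize $\max_{j}\sum_i\xi_{ij}$ over $\xi\in\mathbb R^{\mathcal G}_+$ subject to $\sum_j\mu_{ij}\nu_j\xi_{ij}=\lambda_i$ for all $i$" has a unique solution $\xi^*$, and it satisfies $\sum_{i}\xi^*_{ij}=1$ for all $j$ and $\xi^*_{ij}>0$ for all $i\sim j$. Put $z^*_{ij}:=\xi^*_{ij}\nu_j$ and $\theta_j:=\hat\nu_j+\sum_{i\in\mathcal I(j)}(\hat\mu_{ij}/\mu_{ij})z^*_{ij}$. SWSS parameter: for a probability vector $p\in\mathbb R^I$ with positive entries, $\vartheta_p$ is the (unique) optimal value of the linear program: maximize $\vartheta$ over $(\vartheta,\kappa)\in\mathbb R\times\mathbb R^{\mathcal G}$ subject to $\hat\lambda_i\le\sum_{j\in\mathcal J(i)}\mu_{ij}\kappa_{ij}-\vartheta p_i$ for all $i\in\mathcal I$ and $\sum_{i\in\mathcal I(j)}\kappa_{ij}=\theta_j$ for all $j\in\mathcal J$. Gains: for $i\in\mathcal I$, $j\in\mathcal J$, let $(i_1,j_1,i_2,j_2,\dots,i_m,j_m)$ be the unique shortest path in $\mathcal G$ from $i=i_1$ to $j=j_m$, and set $\mathfrak d(i,j):=\mu_{i_1j_1}\prod_{k=1}^{m-1}\mu_{i_{k+1}j_{k+1}}/\mu_{i_{k+1}j_k}$.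 For $i\ne i'$ in $\mathcal I$ with shortest path $(i_1,j_1,\dots,j_{m-1},i_m)$ from $i=i_1$ to $i'=i_m$, set $\mathfrak d(i,i'):=\prod_{k=1}^{m-1}\mu_{i_kj_k}/\mu_{i_{k+1}j_k}$; and $\mathfrak d(i,i):=1$. *)

theory Defs
  imports "HOL-Analysis.Analysis"
begin

text \<open>Vertices of the bipartite graph: Inl i (customer class), Inr j (server pool).
  The edge set is given by a relation E :: 'i => 'j => bool (E i j iff i ~ j).\<close>

fun gadj :: "('i \<Rightarrow> 'j \<Rightarrow> bool) \<Rightarrow> ('i + 'j) \<Rightarrow> ('i + 'j) \<Rightarrow> bool" where
  "gadj E (Inl i) (Inr j) = E i j"
| "gadj E (Inr j) (Inl i) = E i j"
| "gadj E _ _ = False"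

definition is_walk :: "('i \<Rightarrow> 'j \<Rightarrow> bool) \<Rightarrow> ('i + 'j) list \<Rightarrow> ('i + 'j) \<Rightarrow> ('i + 'j) \<Rightarrow> bool" where
  "is_walk E ps u v \<longleftrightarrow> ps \<noteq> [] \<and> hd ps = u \<and> last ps = v \<and>
     (\<forall>k. Suc k < length ps \<longrightarrow> gadj E (ps ! k) (ps ! Suc k))"

definition is_cycle :: "('i \<Rightarrow> 'j \<Rightarrow> bool) \<Rightarrow> ('i + 'j) list \<Rightarrow> bool" where
  "is_cycle E cs \<longleftrightarrow> length cs \<ge> 3 \<and> distinct cs \<and>
     (\<forall>k. Suc k < length cs \<longrightarrow> gadj E (cs ! k) (cs ! Suc k)) \<and> gadj E (last cs) (hd cs)"

definition is_tree :: "('i \<Rightarrow> 'j \<Rightarrow> bool) \<Rightarrow> bool" where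
  "is_tree E \<longleftrightarrow> (\<forall>u v. (gadj E)\<^sup>*\<^sup>* u v) \<and> \<not> (\<exists>cs. is_cycle E cs)"

definition shortest_path :: "('i \<Rightarrow> 'j \<Rightarrow> bool) \<Rightarrow> ('i + 'j) \<Rightarrow> ('i + 'j) \<Rightarrow> ('i + 'j) list" where
  "shortest_path E u v = (THE ps. is_walk E ps u v \<and>
      (\<forall>qs. is_walk E qs u v \<longrightarrow> length ps \<le> length qs))"

fun cls :: "('i + 'j) \<Rightarrow> 'i" where
  "cls (Inl i) = i" | "cls (Inr j) = undefined"

fun pool :: "('i + 'j) \<Rightarrow> 'j" where
  "pool (Inr j) = j" | "pool (Inl i) = undefined"

text \<open>Path (i_1,j_1,...,i_m,j_m) from i to j; i_k = cls (ps!(2(k-1))), j_k = pool (ps!(2k-1)).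
  d(i,j) = mu_{i_1 j_1} * prod_{k=1}^{m-1} mu_{i_{k+1} j_{k+1}} / mu_{i_{k+1} j_k}.\<close>
definition gain_cp :: "('i \<Rightarrow> 'j \<Rightarrow> bool) \<Rightarrow> ('i \<Rightarrow> 'j \<Rightarrow> real) \<Rightarrow> 'i \<Rightarrow> 'j \<Rightarrow> real" where
  "gain_cp E mu i j =
    (let ps = shortest_path E (Inl i) (Inr j);
         m = length ps div 2;
         ic = (\<lambda>k. cls (ps ! (2 * (k - 1))));
         jc = (\<lambda>k. pool (ps ! (2 * k - 1)))
     in mu (ic 1) (jc 1) * (\<Prod>k\<in>{1..m - 1}. mu (ic (k + 1)) (jc (k + 1)) / mu (ic (k + 1)) (jc k)))"

text \<open>Path (i_1,j_1,...,j_{m-1},i_m) from i to i' (i ~= i');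
  d(i,i') = prod_{k=1}^{m-1} mu_{i_k j_k} / mu_{i_{k+1} j_k};  d(i,i) = 1.\<close>
definition gain_cc :: "('i \<Rightarrow> 'j \<Rightarrow> bool) \<Rightarrow> ('i \<Rightarrow> 'j \<Rightarrow> real) \<Rightarrow> 'i \<Rightarrow> 'i \<Rightarrow> real" where
  "gain_cc E mu i i' =
    (if i = i' then 1 else
     (let ps = shortest_path E (Inl i) (Inl i');
          m = (length ps + 1) div 2;
          ic = (\<lambda>k. cls (ps ! (2 * (k - 1))));
          jc = (\<lambda>k. pool (ps ! (2 * k - 1)))
      in (\<Prod>k\<in>{1..m - 1}. mu (ic k) (jc k) / mu (ic (k + 1)) (jc k))))"

definition in_RG :: "('i \<Rightarrow> 'j \<Rightarrow> bool) \<Rightarrow> ('i \<Rightarrow> 'j \<Rightarrow> real) \<Rightarrow> bool" where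
  "in_RG E x \<longleftrightarrow> (\<forall>i j. \<not> E i j \<longrightarrow> x i j = 0)"

definition crp_feasible :: "('i \<Rightarrow> 'j \<Rightarrow> bool) \<Rightarrow> ('i \<Rightarrow> 'j \<Rightarrow> real) \<Rightarrow> ('j \<Rightarrow> real) \<Rightarrow> ('i \<Rightarrow> real)
    \<Rightarrow> ('i::finite \<Rightarrow> 'j::finite \<Rightarrow> real) \<Rightarrow> bool" where
  "crp_feasible E mu nu lam xi \<longleftrightarrow> in_RG E xi \<and> (\<forall>i j. xi i j \<ge> 0) \<and>
     (\<forall>i. (\<Sum>j\<in>UNIV. mu i j * nu j * xi i j) = lam i)"

definition crp_obj :: "('i::finite \<Rightarrow> 'j::finite \<Rightarrow> real) \<Rightarrow> real" where
  "crp_obj xi = Max (range (\<lambda>j. \<Sum>i\<in>UNIV. xi i j))"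

definition crp_optimal :: "('i \<Rightarrow> 'j \<Rightarrow> bool) \<Rightarrow> ('i \<Rightarrow> 'j \<Rightarrow> real) \<Rightarrow> ('j \<Rightarrow> real) \<Rightarrow> ('i \<Rightarrow> real)
    \<Rightarrow> ('i::finite \<Rightarrow> 'j::finite \<Rightarrow> real) \<Rightarrow> bool" where
  "crp_optimal E mu nu lam xi \<longleftrightarrow> crp_feasible E mu nu lam xi \<and>
     (\<forall>xi'. crp_feasible E mu nu lam xi' \<longrightarrow> crp_obj xi \<le> crp_obj xi')"

definition swss_feasible :: "('i \<Rightarrow> 'j \<Rightarrow> bool) \<Rightarrow> ('i \<Rightarrow> 'j \<Rightarrow> real) \<Rightarrow> ('i \<Rightarrow> real) \<Rightarrow> ('j \<Rightarrow> real)
    \<Rightarrow> ('i::finite \<Rightarrow> real) \<Rightarrow> real \<Rightarrow> ('i \<Rightarrow> 'j::finite \<Rightarrow> real) \<Rightarrow> bool" where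
  "swss_feasible E mu lamhat theta p vt kappa \<longleftrightarrow> in_RG E kappa \<and>
     (\<forall>i. lamhat i \<le> (\<Sum>j\<in>{j. E i j}. mu i j * kappa i j) - vt * p i) \<and>
     (\<forall>j. (\<Sum>i\<in>{i. E i j}. kappa i j) = theta j)"

definition swss :: "('i::finite \<Rightarrow> 'j::finite \<Rightarrow> bool) \<Rightarrow> ('i \<Rightarrow> 'j \<Rightarrow> real) \<Rightarrow> ('i \<Rightarrow> real) \<Rightarrow> ('j \<Rightarrow> real)
    \<Rightarrow> ('i \<Rightarrow> real) \<Rightarrow> real" where
  "swss E mu lamhat theta p = (GREATEST vt. \<exists>kappa::'i \<Rightarrow> 'j \<Rightarrow> real. swss_feasible E mu lamhat theta p vt kappa)"

end

theory Submission
  imports Defs "HOL-Analysis.Analysis"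
begin


lemma gadj_sym: "gadj E x y = gadj E y x"
  by (cases x; cases y) auto

lemma tree_flow:
  fixes E :: "'i::finite \<Rightarrow> 'j::finite \<Rightarrow> bool" and A :: "'i \<Rightarrow> real" and B :: "'j \<Rightarrow> real"
  assumes conn: "\<forall>u v. (gadj E)\<^sup>*\<^sup>* u v"
    and bal: "(\<Sum>l\<in>UNIV. A l) = (\<Sum>j\<in>UNIV. B j)"
  shows "\<exists>y. (\<forall>l. (\<Sum>j\<in>{j. E l j}. y l j) = A l) \<and> (\<forall>j. (\<Sum>l\<in>{l. E l j}. y l j) = B j)"
proof -
  define T :: "real^('i\<times>'j) \<Rightarrow> (real^'i) \<times> (real^'j)" where
    "T y = (\<chi> l. \<Sum>j\<in>{j. E l j}. y$(l,j), \<chi> j. \<Sum>l\<in>{l. E l j}. y$(l,j))" for y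
  have linT: "linear T"
    unfolding linear_iff T_def
    by (auto simp: vec_eq_iff sum.distrib sum_distrib_left)
  have sub: "subspace (range T)"
    using linear_subspace_image[OF linT subspace_UNIV] by simp
  have spanT: "span (range T) = range T"
    using sub by (simp add: span_eq_iff)
  define c where "c = ((\<chi> l. A l, \<chi> j. B j) :: (real^'i) \<times> (real^'j))"
  obtain w z where w: "w \<in> span (range T)" and z: "\<And>x. x \<in> span (range T) \<Longrightarrow> orthogonal z x"
    and cwz: "c = w + z"
    using orthogonal_subspace_decomp_exists[of "range T" c] by blast
  obtain z1 z2 where zz: "z = (z1, z2)" by (cases z)
  have edge: "z1$l + z2$j = 0" if "E l j" for l j
  proof -
    define y0 :: "real^('i\<times>'j)" where "y0 = (\<chi> p. if p = (l,j) then 1 else 0)"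
    have "T y0 = (\<chi> l'. if l' = l then 1 else 0, \<chi> j'. if j' = j then 1 else 0)"
      using that by (auto simp: T_def y0_def vec_eq_iff)
    moreover have "orthogonal z (T y0)" using z spanT by auto
    ultimately show ?thesis
      by (simp add: zz orthogonal_def inner_vec_def if_distrib cong: if_cong)
  qed
  define psi where "psi v = (case v of Inl l \<Rightarrow> z1$l | Inr j \<Rightarrow> - z2$j)" for v
  have pstep: "psi x = psi y" if "gadj E x y" for x y
    using that edge by (cases x; cases y) (auto simp: psi_def add_eq_0_iff)
  have pconst: "psi u = psi v" for u v
  proof -
    have "(gadj E)\<^sup>*\<^sup>* u v" using conn by blast
    then show ?thesis
      by (induction rule: rtranclp_induct) (auto dest: pstep)
  qed
  define a where "a = psi (Inl undefined)"
  have z1a: "z1$l = a" for l using pconst[of "Inl l" "Inl undefined"] by (simp add: a_def psi_def)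
  have z2a: "z2$j = - a" for j using pconst[of "Inr j" "Inl undefined"] by (simp add: a_def psi_def)
  have "inner z c = a * (\<Sum>l\<in>UNIV. A l) - a * (\<Sum>j\<in>UNIV. B j)"
    by (simp add: zz c_def inner_vec_def z1a z2a sum_distrib_left sum_negf)
  then have zc: "inner z c = 0" using bal by simp
  have "inner z w = 0" using z[OF w] by (simp add: orthogonal_def)
  then have "inner z z = 0" using zc cwz by (simp add: inner_add_right)
  then have "z = 0" by simp
  then have "c \<in> range T" using cwz w spanT by simp
  then obtain y where "T y = c" by blast
  then have "(\<forall>l. (\<Sum>j\<in>{j. E l j}. y$(l,j)) = A l) \<and> (\<forall>j. (\<Sum>l\<in>{l. E l j}. y$(l,j)) = B j)"
    by (auto simp: T_def c_def vec_eq_iff)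
  then show ?thesis by (intro exI[of _ "\<lambda>l j. y$(l,j)"]) simp
qed


definition minwalk where
  "minwalk E ps u v \<longleftrightarrow> is_walk E ps u v \<and> (\<forall>qs. is_walk E qs u v \<longrightarrow> length ps \<le> length qs)"

lemma walk_iff: "is_walk E ps u v \<longleftrightarrow> ps \<noteq> [] \<and> hd ps = u \<and> last ps = v \<and> successively (gadj E) ps"
  by (simp add: is_walk_def successively_conv_nth)

lemma minwalk_exists:
  assumes "is_walk E ps u v" shows "\<exists>ps. minwalk E ps u v"
proof -
  from ex_has_least_nat[of "\<lambda>ps. is_walk E ps u v" ps length, OF assms]
  obtain q where "is_walk E q u v" "\<forall>y. is_walk E y u v \<longrightarrow> length q \<le> length y" by blast
  then show ?thesis unfolding minwalk_def by blast
qed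

lemma walk_drop:
  assumes "is_walk E ps u v" "k < length ps"
  shows "is_walk E (drop k ps) (ps!k) v"
  using assms unfolding is_walk_def
  by (auto simp: hd_drop_conv_nth last_drop)

lemma walk_join:
  assumes "is_walk E ps u v" "is_walk E qs v w"
  shows "is_walk E (ps @ tl qs) u w"
proof -
  have qs: "qs = v # tl qs" using assms(2) unfolding walk_iff by (cases qs) auto
  have s: "successively (gadj E) (v # tl qs)" using assms(2) qs unfolding walk_iff by metis
  have ps: "ps \<noteq> []" "hd ps = u" "last ps = v" "successively (gadj E) ps" using assms(1) unfolding walk_iff by auto
  have lq: "last qs = w" using assms(2) unfolding walk_iff by auto
  show ?thesis
  proof (cases "tl qs = []")
    case True
    then have "w = v" using qs lq by (metis last.simps)
    then show ?thesis using True ps unfolding walk_iff by simp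
  next
    case False
    have s2: "successively (gadj E) (tl qs)" "gadj E v (hd (tl qs))"
      using s False unfolding successively_Cons by auto
    have "last (tl qs) = w" using False qs lq by (metis last_ConsR)
    then show ?thesis using ps s2 False unfolding walk_iff successively_append_iff by simp
  qed
qed
lemma walk_take:
  assumes "is_walk E ps u v" "k < length ps"
  shows "is_walk E (take (Suc k) ps) u (ps!k)"
proof -
  have ne: "ps \<noteq> []" and h: "hd ps = u" and adj: "\<And>i. Suc i < length ps \<Longrightarrow> gadj E (ps!i) (ps!Suc i)"
    using assms(1) unfolding is_walk_def by auto
  have len: "length (take (Suc k) ps) = Suc k" using assms(2) by simp
  have "hd (take (Suc k) ps) = u" using ne h by (simp add: hd_take)
  moreover have "last (take (Suc k) ps) = ps!k"
  proof -
    have "last (take (Suc k) ps) = take (Suc k) ps ! (length (take (Suc k) ps) - 1)"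
      by (rule last_conv_nth) (use len in auto)
    also have "\<dots> = ps!k" using len by simp
    finally show ?thesis .
  qed
  moreover have "gadj E (take (Suc k) ps ! i) (take (Suc k) ps ! Suc i)" if "Suc i < length (take (Suc k) ps)" for i
    using that len adj[of i] assms(2) by simp
  ultimately show ?thesis unfolding is_walk_def using len by auto
qed

lemma walk_exists:
  assumes "(gadj E)\<^sup>*\<^sup>* u v" shows "\<exists>ps. is_walk E ps u v"
  using assms
proof (induction rule: rtranclp_induct)
  case base
  have "is_walk E [u] u u" by (simp add: walk_iff)
  then show ?case by blast
next
  case (step y z)
  then obtain ps where w: "is_walk E ps u y" by blast
  then have ps: "ps \<noteq> []" "hd ps = u" "last ps = y" "successively (gadj E) ps"
    unfolding walk_iff by auto
  have "successively (gadj E) (ps @ [z])"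
    using ps step(2) unfolding successively_append_iff by simp
  then have "is_walk E (ps @ [z]) u z" using ps unfolding walk_iff by simp
  then show ?case by blast
qed

lemma minwalk_take:
  assumes "minwalk E ps u v" "k < length ps"
  shows "minwalk E (take (Suc k) ps) u (ps!k)"
proof -
  have w: "is_walk E ps u v" using assms unfolding minwalk_def by blast
  have "length (take (Suc k) ps) \<le> length qs" if q: "is_walk E qs u (ps!k)" for qs
  proof (rule ccontr)
    assume "\<not> ?thesis"
    then have lq: "length qs < Suc k" using assms(2) by simp
    have "is_walk E (qs @ tl (drop k ps)) u v" using walk_join[OF q walk_drop[OF w assms(2)]] .
    moreover have "length (qs @ tl (drop k ps)) < length ps" using lq assms(2) by simp
    ultimately show False using assms(1) unfolding minwalk_def by fastforce
  qed
  then show ?thesis using walk_take[OF w assms(2)] unfolding minwalk_def by blast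
qed

lemma minwalk_len_eq:
  assumes "minwalk E P u v" "minwalk E Q u v" shows "length P = length Q"
  using assms unfolding minwalk_def by (meson antisym)

lemma minwalk_idx:
  assumes "minwalk E P u v" "minwalk E Q u v'" "a < length P" "b < length Q" "P!a = Q!b"
  shows "a = b"
proof -
  have "minwalk E (take (Suc b) Q) u (P!a)" using minwalk_take[OF assms(2,4)] assms(5) by simp
  then have "length (take (Suc a) P) = length (take (Suc b) Q)"
    by (rule minwalk_len_eq[OF minwalk_take[OF assms(1,3)]])
  then show ?thesis using assms(3,4) by simp
qed

lemma successively_uptI:
  assumes "\<And>k. a \<le> k \<Longrightarrow> Suc k < b \<Longrightarrow> R k (Suc k)"
  shows "successively R [a..<b]"
  unfolding successively_conv_nth
proof (intro allI impI)
  fix i assume "Suc i < length [a..<b]"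
  then have "Suc (a+i) < b" by simp
  then show "R ([a..<b]!i) ([a..<b]!Suc i)" using assms[of "a+i"] by simp
qed


lemma minwalk_unique:
  assumes tree: "is_tree E" and P: "minwalk E P u v" and Q: "minwalk E Q u v"
  shows "P = Q"
proof (rule ccontr)
  assume ne: "P \<noteq> Q"
  have wP: "is_walk E P u v" and wQ: "is_walk E Q u v" using P Q unfolding minwalk_def by auto
  define n where "n = length P"
  have nQ: "length Q = n" using minwalk_len_eq[OF P Q] n_def by simp
  have n0: "n > 0" using wP n_def unfolding is_walk_def by simp
  have hP: "P \<noteq> []" "hd P = u" "last P = v" and hQ: "Q \<noteq> []" "hd Q = u" "last Q = v"
    using wP wQ unfolding is_walk_def by auto
  have P0: "P!0 = Q!0" using hP hQ by (simp add: hd_conv_nth[symmetric])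
  have Pn: "P!(n-1) = Q!(n-1)" using hP hQ nQ n_def last_conv_nth[of P] last_conv_nth[of Q] by simp
  have ex: "\<exists>k<n. P!k \<noteq> Q!k"
  proof (rule ccontr)
    assume "\<not> ?thesis"
    then have "P = Q" using nQ n_def by (intro nth_equalityI) auto
    with ne show False by simp
  qed
  define m where "m = (LEAST k. k < n \<and> P!k \<noteq> Q!k)"
  have m1: "m < n" "P!m \<noteq> Q!m" using LeastI_ex[OF ex] unfolding m_def by auto
  have m2: "P!k = Q!k" if "k < m" for k using not_less_Least[OF that[unfolded m_def]] m1 that by auto
  have m0: "m > 0" using m1 P0 by (cases m) auto
  have "m \<noteq> n - 1" using m1 Pn by auto
  then have mn: "m < n - 1" using m1 by linarith
  have ex2: "\<exists>k. m < k \<and> k < n \<and> P!k = Q!k" using mn Pn by (intro exI[of _ "n-1"]) auto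
  define t where "t = (LEAST k. m < k \<and> k < n \<and> P!k = Q!k)"
  have t1: "m < t" "t < n" "P!t = Q!t" using LeastI_ex[OF ex2] unfolding t_def by auto
  have t2: "P!k \<noteq> Q!k" if "m < k" "k < t" for k
    using not_less_Least[OF that(2)[unfolded t_def]] that t1 by auto
  have idx: "a = b" if "a < n" "b < n" "P!a = Q!b" for a b
    using minwalk_idx[OF P Q] that nQ n_def by auto
  have idxP: "inj_on (nth P) {..<n}" using minwalk_idx[OF P P] n_def by (auto simp: inj_on_def)
  have idxQ: "inj_on (nth Q) {..<n}" using minwalk_idx[OF Q Q] nQ by (auto simp: inj_on_def)
  have sP: "gadj E (P!k) (P!Suc k)" if "Suc k < n" for k using wP that n_def unfolding is_walk_def by auto
  have sQ: "gadj E (Q!k) (Q!Suc k)" if "Suc k < n" for k using wQ that nQ unfolding is_walk_def by auto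
  define cs where "cs = map (nth P) [m-1..<Suc t] @ rev (map (nth Q) [m..<t])"
  have "is_cycle E cs"
  proof -
    have len: "length cs \<ge> 3" using t1 m0 unfolding cs_def by simp linarith
    have d1: "distinct (map (nth P) [m-1..<Suc t])"
      using t1 by (auto simp: distinct_map intro: inj_on_subset[OF idxP])
    have d2: "distinct (map (nth Q) [m..<t])"
      using t1 by (auto simp: distinct_map intro: inj_on_subset[OF idxQ])
    have d3: "P!a \<noteq> Q!b" if "m - 1 \<le> a" "a < Suc t" "m \<le> b" "b < t" for a b
    proof
      assume eq: "P!a = Q!b"
      then have "a = b" using idx that t1 by auto
      then show False using eq that t2 m1 by (cases "a = m") auto
    qed
    have dist: "distinct cs" using d1 d2 d3 unfolding cs_def by auto
    have s1: "successively (gadj E) (map (nth P) [m-1..<Suc t])"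
      unfolding successively_map by (rule successively_uptI) (use t1 sP in auto)
    have s2: "successively (gadj E) (rev (map (nth Q) [m..<t]))"
      unfolding successively_rev successively_map
    proof (rule successively_uptI)
      fix k assume "m \<le> k" "Suc k < t"
      then have "gadj E (Q!k) (Q!Suc k)" using sQ t1 by simp
      then show "gadj E (Q!Suc k) (Q!k)" by (subst gadj_sym)
    qed
    have lastP: "last (map (nth P) [m-1..<Suc t]) = P!t" using m0 t1 by (cases "m-1 \<le> t") auto
    have hdQ: "hd (rev (map (nth Q) [m..<t])) = Q!(t-1)" using t1 by (cases t) (auto simp: hd_rev)
    have "gadj E (Q!(t-1)) (Q!Suc (t-1))" using sQ[of "t-1"] t1 by simp
    then have "gadj E (Q!(t-1)) (P!t)" using t1 by simp
    then have j: "gadj E (P!t) (Q!(t-1))" by (subst gadj_sym)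
    have succ: "successively (gadj E) cs"
      unfolding cs_def successively_append_iff using s1 s2 lastP hdQ j by simp
    have lastcs: "last cs = Q!m" using t1 unfolding cs_def by (simp add: last_rev hd_map)
    have hdcs: "hd cs = Q!(m-1)" using m0 t1 m2[of "m-1"] unfolding cs_def by (subst upt_conv_Cons) auto
    have "gadj E (Q!(m-1)) (Q!Suc (m-1))" using sQ[of "m-1"] m0 m1 by simp
    then have "gadj E (Q!(m-1)) (Q!m)" using m0 by simp
    then have cl: "gadj E (last cs) (hd cs)" using lastcs hdcs by (subst gadj_sym) simp
    show ?thesis unfolding is_cycle_def using len dist succ cl successively_conv_nth by blast
  qed
  then show False using tree unfolding is_tree_def by blast
qed



lemma gadj_isl: "gadj E x y \<Longrightarrow> isl y = (\<not> isl x)"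
  by (cases x; cases y) auto

lemma walk_parity:
  assumes "is_walk E ps (Inl i) v" "k < length ps"
  shows "isl (ps!k) = even k"
  using assms(2)
proof (induction k)
  case 0
  have ne: "ps \<noteq> []" and h: "hd ps = Inl i" using assms(1) unfolding is_walk_def by auto
  have "ps!0 = hd ps" using ne by (simp add: hd_conv_nth)
  then show ?case using h by simp
next
  case (Suc k)
  then have "gadj E (ps!k) (ps!Suc k)" using assms(1) unfolding is_walk_def by blast
  then show ?case using Suc gadj_isl by fastforce
qed

lemma walk_last_parity:
  assumes "is_walk E ps (Inl i) v"
  shows "isl v = odd (length ps)"
proof -
  have ne: "ps \<noteq> []" and lv: "last ps = v" using assms unfolding is_walk_def by auto
  have "isl (ps!(length ps - 1)) = even (length ps - 1)"
    using walk_parity[OF assms] ne by simp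
  moreover have "ps!(length ps - 1) = v" using ne lv by (simp add: last_conv_nth)
  ultimately show ?thesis using ne by (cases "length ps") auto
qed

lemma walk_snoc:
  assumes "is_walk E ps u v" "gadj E v w"
  shows "is_walk E (ps @ [w]) u w"
proof -
  have ps: "ps \<noteq> []" "hd ps = u" "last ps = v" "successively (gadj E) ps"
    using assms(1) unfolding walk_iff by auto
  have "successively (gadj E) (ps @ [w])"
    using ps assms(2) unfolding successively_append_iff by simp
  then show ?thesis using ps unfolding walk_iff by simp
qed

lemma sp_minwalk:
  assumes tree: "is_tree E"
  shows "minwalk E (shortest_path E u v) u v"
proof -
  have "(gadj E)\<^sup>*\<^sup>* u v" using tree unfolding is_tree_def by blast
  then obtain ps where "is_walk E ps u v" using walk_exists by blast
  then obtain P where P: "minwalk E P u v" using minwalk_exists by blast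
  have "shortest_path E u v = P" unfolding shortest_path_def
  proof (rule the_equality)
    show "is_walk E P u v \<and> (\<forall>qs. is_walk E qs u v \<longrightarrow> length P \<le> length qs)"
      using P unfolding minwalk_def .
  next
    fix ps assume "is_walk E ps u v \<and> (\<forall>qs. is_walk E qs u v \<longrightarrow> length ps \<le> length qs)"
    then have "minwalk E ps u v" unfolding minwalk_def .
    then show "ps = P" using minwalk_unique[OF tree _ P] by blast
  qed
  then show ?thesis using P by simp
qed

lemma sp_eq:
  assumes tree: "is_tree E" and "minwalk E P u v"
  shows "shortest_path E u v = P"
  using minwalk_unique[OF tree sp_minwalk[OF tree] assms(2)] .

lemma sp_root:
  assumes tree: "is_tree E"
  shows "shortest_path E u u = [u]"
proof (rule sp_eq[OF tree])
  show "minwalk E [u] u u" unfolding minwalk_def is_walk_def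
    by (auto simp: Suc_le_eq)
qed

lemma sp_edge:
  assumes tree: "is_tree E" and e: "E l j"
  shows "shortest_path E (Inl i) (Inr j) = shortest_path E (Inl i) (Inl l) @ [Inr j] \<or>
         shortest_path E (Inl i) (Inl l) = shortest_path E (Inl i) (Inr j) @ [Inl l]"
proof -
  define Pl where "Pl = shortest_path E (Inl i) (Inl l)"
  define Pj where "Pj = shortest_path E (Inl i) (Inr j)"
  have ml: "minwalk E Pl (Inl i) (Inl l)" using sp_minwalk[OF tree] Pl_def by simp
  have mj: "minwalk E Pj (Inl i) (Inr j)" using sp_minwalk[OF tree] Pj_def by simp
  have wl: "is_walk E Pl (Inl i) (Inl l)" and wj: "is_walk E Pj (Inl i) (Inr j)"
    using ml mj unfolding minwalk_def by auto
  have wl2: "is_walk E (Pl @ [Inr j]) (Inl i) (Inr j)" using walk_snoc[OF wl] e by simp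
  have wj2: "is_walk E (Pj @ [Inl l]) (Inl i) (Inl l)" using walk_snoc[OF wj] e by simp
  have le1: "length Pj \<le> length Pl + 1" using mj wl2 unfolding minwalk_def by fastforce
  have le2: "length Pl \<le> length Pj + 1" using ml wj2 unfolding minwalk_def by fastforce
  have ol: "odd (length Pl)" using walk_last_parity[OF wl] by simp
  have oj: "even (length Pj)" using walk_last_parity[OF wj] by simp
  have "length Pj = length Pl + 1 \<or> length Pl = length Pj + 1"
    using le1 le2 ol oj by presburger
  then show ?thesis
  proof
    assume h: "length Pj = length Pl + 1"
    have "minwalk E (Pl @ [Inr j]) (Inl i) (Inr j)"
      using wl2 mj h unfolding minwalk_def by auto
    then show ?thesis using sp_eq[OF tree] Pj_def Pl_def by simp
  next
    assume h: "length Pl = length Pj + 1"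
    have "minwalk E (Pj @ [Inl l]) (Inl i) (Inl l)"
      using wj2 ml h unfolding minwalk_def by auto
    then show ?thesis using sp_eq[OF tree] Pj_def Pl_def by simp
  qed
qed



definition FF :: "('i \<Rightarrow> 'j \<Rightarrow> real) \<Rightarrow> ('i + 'j) list \<Rightarrow> nat \<Rightarrow> real" where
  "FF mu q k = mu (cls (q ! (2 * (k - 1)))) (pool (q ! (2 * k - 1)))"
definition GG :: "('i \<Rightarrow> 'j \<Rightarrow> real) \<Rightarrow> ('i + 'j) list \<Rightarrow> nat \<Rightarrow> real" where
  "GG mu q k = mu (cls (q ! (2 * k))) (pool (q ! (2 * k - 1)))"

definition fcp where "fcp mu q = FF mu q 1 * (\<Prod>k\<in>{1..length q div 2 - 1}. FF mu q (k+1) / GG mu q k)"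
definition fcc where "fcc mu q = (\<Prod>k\<in>{1..(length q + 1) div 2 - 1}. FF mu q k / GG mu q k)"

lemma gain_cp_fcp: "gain_cp E mu i j = fcp mu (shortest_path E (Inl i) (Inr j))"
  by (simp add: gain_cp_def fcp_def FF_def GG_def Let_def)

lemma gain_cc_fcc: "gain_cc E mu i l = (if i = l then 1 else fcc mu (shortest_path E (Inl i) (Inl l)))"
  by (simp add: gain_cc_def fcc_def FF_def GG_def Let_def)

lemma telescope:
  fixes f g :: "nat \<Rightarrow> real"
  shows "f 1 * (\<Prod>k\<in>{1..n}. f (k+1) / g k) = (\<Prod>k\<in>{1..n}. f k / g k) * f (n+1)"
proof (induction n)
  case 0
  then show ?case by simp
next
  case (Suc n)
  have "f 1 * (\<Prod>k\<in>{1..Suc n}. f (k+1) / g k) = (f 1 * (\<Prod>k\<in>{1..n}. f (k+1) / g k)) * (f (n+2) / g (Suc n))"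
    by (simp add: prod.cl_ivl_Suc mult_ac)
  also have "\<dots> = (\<Prod>k\<in>{1..n}. f k / g k) * f (n+1) * (f (n+2) / g (Suc n))" using Suc by simp
  also have "\<dots> = (\<Prod>k\<in>{1..Suc n}. f k / g k) * f (Suc n + 1)"
    by (simp add: prod.cl_ivl_Suc mult_ac divide_inverse)
  finally show ?case .
qed

lemma fcp_snoc:
  assumes od: "odd (length ps)" and lst: "ps ! (length ps - 1) = Inl l"
  shows "fcp mu (ps @ [Inr j]) = fcc mu ps * mu l j"
proof -
  define n where "n = length ps"
  define q where "q = ps @ [Inr j]"
  define m where "m = (n + 1) div 2"
  have m1: "m \<ge> 1" and nm: "n = 2*m - 1" using od n_def m_def by (auto elim!: oddE)
  have lq: "length q div 2 = m" using nm m1 q_def n_def by simp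
  have lp: "(length ps + 1) div 2 = m" using m_def n_def by simp
  have eqF: "FF mu q k = FF mu ps k" if "k \<in> {1..m-1}" for k
    using that nm m1 unfolding FF_def q_def n_def by (auto simp: nth_append)
  have eqG: "GG mu q k = GG mu ps k" if "k \<in> {1..m-1}" for k
    using that nm m1 unfolding GG_def q_def n_def by (auto simp: nth_append)
  have "fcp mu q = (\<Prod>k\<in>{1..m-1}. FF mu q k / GG mu q k) * FF mu q (m - 1 + 1)"
    unfolding fcp_def lq by (rule telescope)
  also have "(\<Prod>k\<in>{1..m-1}. FF mu q k / GG mu q k) = fcc mu ps"
    unfolding fcc_def lp using eqF eqG by (intro prod.cong) auto
  also have "FF mu q (m - 1 + 1) = mu l j"
  proof -
    have a: "2 * (m - 1 + 1 - 1) = n - 1" and b: "2 * (m - 1 + 1) - 1 = n" using nm m1 by auto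
    have "q ! (n - 1) = Inl l" using lst nm m1 unfolding q_def n_def by (auto simp: nth_append)
    moreover have "q ! n = Inr j" unfolding q_def n_def by simp
    ultimately show ?thesis unfolding FF_def a b by simp
  qed
  finally show ?thesis unfolding q_def .
qed

lemma fcc_snoc:
  assumes ev: "even (length ps)" and ne: "ps \<noteq> []" and lst: "ps ! (length ps - 1) = Inr j"
  shows "fcc mu (ps @ [Inl l]) = fcp mu ps / mu l j"
proof -
  define n where "n = length ps"
  define q where "q = ps @ [Inl l]"
  define m where "m = n div 2"
  have nm: "n = 2*m" using ev n_def m_def by (auto elim!: evenE)
  have m1: "m \<ge> 1" using nm ne n_def by (cases m) auto
  have lq: "(length q + 1) div 2 - 1 = m" using nm q_def n_def by simp
  have lp: "length ps div 2 - 1 = m - 1" using m_def n_def by simp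
  have eqF: "FF mu q k = FF mu ps k" if "k \<in> {1..m}" for k
    using that nm m1 unfolding FF_def q_def n_def by (auto simp: nth_append)
  have eqG: "GG mu q k = GG mu ps k" if "k \<in> {1..m-1}" for k
    using that nm m1 unfolding GG_def q_def n_def by (auto simp: nth_append)
  have Gm: "GG mu q m = mu l j"
  proof -
    have "q ! (2*m) = Inl l" using nm unfolding q_def n_def by (simp add: nth_append)
    moreover have "q ! (2*m - 1) = Inr j" using lst nm m1 unfolding q_def n_def by (auto simp: nth_append)
    ultimately show ?thesis unfolding GG_def by simp
  qed
  have split: "{1..m} = insert m {1..m-1}" using m1 by auto
  have "fcc mu q = (\<Prod>k\<in>{1..m-1}. FF mu q k / GG mu q k) * (FF mu q m / GG mu q m)"
    unfolding fcc_def lq split by (subst prod.insert) (auto simp: mult.commute)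
  also have "(\<Prod>k\<in>{1..m-1}. FF mu q k / GG mu q k) = (\<Prod>k\<in>{1..m-1}. FF mu ps k / GG mu ps k)"
    using eqF eqG by (intro prod.cong) auto
  also have "FF mu q m = FF mu ps m" using eqF m1 by simp
  also have "fcp mu ps = (\<Prod>k\<in>{1..m-1}. FF mu ps k / GG mu ps k) * FF mu ps (m - 1 + 1)"
    unfolding fcp_def lp by (rule telescope)
  then have "(\<Prod>k\<in>{1..m-1}. FF mu ps k / GG mu ps k) * FF mu ps m = fcp mu ps" using m1 by simp
  ultimately have "fcc mu q = fcp mu ps / mu l j" unfolding Gm by (simp add: divide_inverse mult.assoc)
  then show ?thesis unfolding q_def .
qed



lemma potential:
  assumes tree: "is_tree E" and e: "E l j" and mupos: "\<And>i j. E i j \<Longrightarrow> mu i j > 0"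
  shows "gain_cc E mu i l * mu l j = gain_cp E mu i j"
proof -
  define Pl where "Pl = shortest_path E (Inl i) (Inl l)"
  define Pj where "Pj = shortest_path E (Inl i) (Inr j)"
  have wl: "is_walk E Pl (Inl i) (Inl l)" and wj: "is_walk E Pj (Inl i) (Inr j)"
    using sp_minwalk[OF tree] Pl_def Pj_def unfolding minwalk_def by auto
  have ol: "odd (length Pl)" using walk_last_parity[OF wl] by simp
  have oj: "even (length Pj)" using walk_last_parity[OF wj] by simp
  have nel: "Pl \<noteq> []" and nej: "Pj \<noteq> []" using wl wj unfolding is_walk_def by auto
  have ll: "Pl ! (length Pl - 1) = Inl l" using wl nel unfolding is_walk_def by (simp add: last_conv_nth)
  have lj: "Pj ! (length Pj - 1) = Inr j" using wj nej unfolding is_walk_def by (simp add: last_conv_nth)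
  have root: "shortest_path E (Inl i) (Inl i) = [Inl i]" using sp_root[OF tree] .
  have mne: "mu l j \<noteq> 0" using mupos[OF e] by simp
  from sp_edge[OF tree e, of i]
  show ?thesis
  proof
    assume h: "shortest_path E (Inl i) (Inr j) = shortest_path E (Inl i) (Inl l) @ [Inr j]"
    have "gain_cp E mu i j = fcc mu Pl * mu l j"
      unfolding gain_cp_fcp h Pl_def[symmetric] by (rule fcp_snoc[OF ol ll])
    moreover have "gain_cc E mu i l = fcc mu Pl"
    proof (cases "i = l")
      case True
      then have "Pl = [Inl i]" using root Pl_def by simp
      then show ?thesis using True unfolding gain_cc_fcc by (simp add: fcc_def)
    next
      case False
      then show ?thesis unfolding gain_cc_fcc Pl_def by simp
    qed
    ultimately show ?thesis by simp
  next
    assume h: "shortest_path E (Inl i) (Inl l) = shortest_path E (Inl i) (Inr j) @ [Inl l]"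
    have il: "i \<noteq> l"
    proof
      assume "i = l"
      then have "[Inl i] = Pj @ [Inl l]" using h root Pj_def by simp
      then show False using nej by (cases Pj) auto
    qed
    have "gain_cc E mu i l = fcp mu Pj / mu l j"
      unfolding gain_cc_fcc using il h Pj_def fcc_snoc[OF oj nej lj] by simp
    then show ?thesis using mne unfolding gain_cp_fcp Pj_def[symmetric] by simp
  qed
qed

lemma gains_pos_aux:
  assumes tree: "is_tree E" and mupos: "\<And>i j. E i j \<Longrightarrow> mu i j > 0"
  shows "\<forall>v. length (shortest_path E (Inl i) v) = n \<longrightarrow>
           (case v of Inl l \<Rightarrow> gain_cc E mu i l > 0 | Inr j \<Rightarrow> gain_cp E mu i j > 0)"
proof (induction n rule: less_induct)
  case (less n)
  show ?case
  proof (intro allI impI)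
    fix v assume len: "length (shortest_path E (Inl i) v) = n"
    define P where "P = shortest_path E (Inl i) v"
    have mP: "minwalk E P (Inl i) v" using sp_minwalk[OF tree] P_def by simp
    have wP: "is_walk E P (Inl i) v" using mP unfolding minwalk_def by simp
    have ne: "P \<noteq> []" and hP: "hd P = Inl i" and lP: "last P = v" using wP unfolding is_walk_def by auto
    have nP: "length P = n" using len P_def by simp
    show "case v of Inl l \<Rightarrow> gain_cc E mu i l > 0 | Inr j \<Rightarrow> gain_cp E mu i j > 0"
    proof (cases "n \<le> 1")
      case True
      then have "length P = 1" using nP ne by (cases P) auto
      then obtain x where "P = [x]" by (cases P) auto
      then have "v = Inl i" using hP lP by simp
      then show ?thesis by (simp add: gain_cc_def)
    next
      case False
      define w where "w = P ! (n - 2)"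
      have mw: "minwalk E (take (Suc (n-2)) P) (Inl i) w"
        using minwalk_take[OF mP, of "n-2"] False nP w_def by simp
      have spw: "shortest_path E (Inl i) w = take (Suc (n-2)) P" using sp_eq[OF tree mw] .
      have lw: "length (shortest_path E (Inl i) w) < n" using spw False nP by simp
      have IH: "case w of Inl l \<Rightarrow> gain_cc E mu i l > 0 | Inr j \<Rightarrow> gain_cp E mu i j > 0"
        using less[OF lw] by blast
      have "gadj E (P ! (n-2)) (P ! Suc (n-2))" using wP False nP unfolding is_walk_def by simp
      moreover have "P ! Suc (n-2) = v"
      proof -
        have "Suc (n-2) = length P - 1" using False nP by simp
        then show ?thesis using lP ne by (simp add: last_conv_nth)
      qed
      ultimately have g: "gadj E w v" using w_def by simp
      show ?thesis
      proof (cases v)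
        case (Inl l)
        then obtain j where wj: "w = Inr j" and e: "E l j" using g by (cases w) auto
        have "gain_cc E mu i l * mu l j > 0"
          using potential[where mu=mu, OF tree e mupos] IH wj by simp
        then show ?thesis using Inl mupos[OF e] by (simp add: zero_less_mult_iff)
      next
        case (Inr j)
        then obtain l where wl: "w = Inl l" and e: "E l j" using g by (cases w) auto
        have "gain_cc E mu i l * mu l j > 0" using IH wl mupos[OF e] by simp
        then show ?thesis using Inr potential[where mu=mu, OF tree e mupos] by simp
      qed
    qed
  qed
qed

lemma gain_cc_pos:
  assumes tree: "is_tree E" and mupos: "\<And>i j. E i j \<Longrightarrow> mu i j > 0"
  shows "gain_cc E mu i l > 0"
  using gains_pos_aux[where mu=mu and i=i, OF tree mupos, where n="length (shortest_path E (Inl i) (Inl l))"] by auto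



lemma sum_edges_swap:
  fixes E :: "'i::finite \<Rightarrow> 'j::finite \<Rightarrow> bool"
  shows "(\<Sum>l\<in>UNIV. \<Sum>j\<in>{j. E l j}. f l j) = (\<Sum>j\<in>UNIV. \<Sum>l\<in>{l. E l j}. (f l j :: real))"
proof -
  have e1: "(\<Sum>j\<in>{j. E l j}. f l j) = (\<Sum>j\<in>UNIV. if E l j then f l j else 0)" for l
    using sum.inter_filter[of UNIV "f l" "E l"] by simp
  have e2: "(\<Sum>l\<in>{l. E l j}. f l j) = (\<Sum>l\<in>UNIV. if E l j then f l j else 0)" for j
    using sum.inter_filter[of UNIV "\<lambda>l. f l j" "\<lambda>l. E l j"] by simp
  have "(\<Sum>l\<in>UNIV. \<Sum>j\<in>{j. E l j}. f l j) = (\<Sum>l\<in>UNIV. \<Sum>j\<in>UNIV. if E l j then f l j else 0)"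
    using e1 by simp
  also have "\<dots> = (\<Sum>j\<in>UNIV. \<Sum>l\<in>UNIV. if E l j then f l j else 0)" by (rule sum.swap)
  also have "\<dots> = (\<Sum>j\<in>UNIV. \<Sum>l\<in>{l. E l j}. f l j)"
    using e2 by simp
  finally show ?thesis .
qed

lemma main_swss:
  fixes E :: "'i::finite \<Rightarrow> 'j::finite \<Rightarrow> bool" and mu :: "'i \<Rightarrow> 'j \<Rightarrow> real"
  assumes tree: "is_tree E" and mupos: "\<And>i j. E i j \<Longrightarrow> mu i j > 0"
    and ppos: "\<And>i. p i > 0"
  shows "swss E mu lamhat theta p =
     ((\<Sum>j\<in>UNIV. gain_cp E mu i j * theta j) - (\<Sum>l\<in>UNIV. gain_cc E mu i l * lamhat l))
       / (\<Sum>l\<in>UNIV. gain_cc E mu i l * p l)"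
proof -
  define d where "d l = gain_cc E mu i l" for l
  define dj where "dj j = gain_cp E mu i j" for j
  have dpos: "d l > 0" for l unfolding d_def using gain_cc_pos[where mu=mu, OF tree mupos] .
  have pot: "d l * mu l j = dj j" if "E l j" for l j
    unfolding d_def dj_def using potential[where mu=mu, OF tree that mupos] .
  define D where "D = (\<Sum>l\<in>UNIV. d l * p l)"
  have Dpos: "D > 0" unfolding D_def using dpos ppos
    by (intro sum_pos) (auto intro: mult_pos_pos)
  define vt0 where "vt0 = ((\<Sum>j\<in>UNIV. dj j * theta j) - (\<Sum>l\<in>UNIV. d l * lamhat l)) / D"
  have ub: "vt \<le> vt0" if "swss_feasible E mu lamhat theta p vt kappa" for vt kappa
  proof -
    have c1: "lamhat l \<le> (\<Sum>j\<in>{j. E l j}. mu l j * kappa l j) - vt * p l" for l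
      using that unfolding swss_feasible_def by blast
    have c2: "(\<Sum>l\<in>{l. E l j}. kappa l j) = theta j" for j
      using that unfolding swss_feasible_def by blast
    have "(\<Sum>l\<in>UNIV. d l * lamhat l) \<le> (\<Sum>l\<in>UNIV. d l * ((\<Sum>j\<in>{j. E l j}. mu l j * kappa l j) - vt * p l))"
      using c1 dpos by (intro sum_mono mult_left_mono) (auto intro: less_imp_le)
    also have "\<dots> = (\<Sum>l\<in>UNIV. \<Sum>j\<in>{j. E l j}. d l * mu l j * kappa l j) - vt * D"
    proof -
      have "d l * ((\<Sum>j\<in>{j. E l j}. mu l j * kappa l j) - vt * p l)
          = (\<Sum>j\<in>{j. E l j}. d l * mu l j * kappa l j) - vt * (d l * p l)" for l
        by (simp add: right_diff_distrib sum_distrib_left mult_ac)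
      then show ?thesis unfolding D_def by (simp add: sum_subtractf sum_distrib_left)
    qed
    also have "(\<Sum>l\<in>UNIV. \<Sum>j\<in>{j. E l j}. d l * mu l j * kappa l j) = (\<Sum>l\<in>UNIV. \<Sum>j\<in>{j. E l j}. dj j * kappa l j)"
      using pot by (intro sum.cong refl) auto
    also have "\<dots> = (\<Sum>j\<in>UNIV. \<Sum>l\<in>{l. E l j}. dj j * kappa l j)" by (rule sum_edges_swap)
    also have "\<dots> = (\<Sum>j\<in>UNIV. dj j * theta j)" using c2 by (simp add: sum_distrib_left[symmetric])
    finally have "vt * D \<le> (\<Sum>j\<in>UNIV. dj j * theta j) - (\<Sum>l\<in>UNIV. d l * lamhat l)" by simp
    then show ?thesis unfolding vt0_def using Dpos by (simp add: le_divide_eq)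
  qed
  have feas: "\<exists>kappa. swss_feasible E mu lamhat theta p vt0 kappa"
  proof -
    define A where "A l = d l * (lamhat l + vt0 * p l)" for l
    define B where "B j = dj j * theta j" for j
    have "(\<Sum>l\<in>UNIV. A l) = (\<Sum>l\<in>UNIV. d l * lamhat l) + vt0 * D"
      unfolding A_def D_def by (simp add: distrib_left sum.distrib sum_distrib_left mult_ac)
    also have "vt0 * D = (\<Sum>j\<in>UNIV. dj j * theta j) - (\<Sum>l\<in>UNIV. d l * lamhat l)"
      unfolding vt0_def using Dpos by simp
    finally have bal: "(\<Sum>l\<in>UNIV. A l) = (\<Sum>j\<in>UNIV. B j)" unfolding B_def by simp
    have conn: "\<forall>u v. (gadj E)\<^sup>*\<^sup>* u v" using tree unfolding is_tree_def by blast
    obtain y where y1: "\<And>l. (\<Sum>j\<in>{j. E l j}. y l j) = A l" and y2: "\<And>j. (\<Sum>l\<in>{l. E l j}. y l j) = B j"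
      using tree_flow[OF conn bal] by blast
    define kappa where "kappa l j = (if E l j then y l j / dj j else 0)" for l j
    have djpos: "dj j > 0" if "E l j" for l j using pot[OF that] dpos[of l] mupos[OF that] by (metis mult_pos_pos)
    have "in_RG E kappa" unfolding in_RG_def kappa_def by simp
    moreover have "lamhat l \<le> (\<Sum>j\<in>{j. E l j}. mu l j * kappa l j) - vt0 * p l" for l
    proof -
      have "(\<Sum>j\<in>{j. E l j}. mu l j * kappa l j) = (\<Sum>j\<in>{j. E l j}. y l j / d l)"
      proof (intro sum.cong refl)
        fix j assume "j \<in> {j. E l j}"
        then have e: "E l j" by simp
        have "mu l j * kappa l j = mu l j * y l j / (d l * mu l j)" using pot[OF e] e by (simp add: kappa_def)
        also have "\<dots> = y l j / d l" using mupos[OF e] by simp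
        finally show "mu l j * kappa l j = y l j / d l" .
      qed
      also have "\<dots> = A l / d l" using y1[of l] by (simp add: sum_divide_distrib[symmetric])
      also have "\<dots> = lamhat l + vt0 * p l" unfolding A_def using dpos[of l] by simp
      finally show ?thesis by simp
    qed
    moreover have "(\<Sum>l\<in>{l. E l j}. kappa l j) = theta j" for j
    proof (cases "\<exists>l. E l j")
      case True
      then obtain l0 where e0: "E l0 j" by blast
      have "(\<Sum>l\<in>{l. E l j}. kappa l j) = (\<Sum>l\<in>{l. E l j}. y l j / dj j)"
        by (intro sum.cong refl) (simp add: kappa_def)
      also have "\<dots> = B j / dj j" using y2[of j] by (simp add: sum_divide_distrib[symmetric])
      also have "\<dots> = theta j" unfolding B_def using djpos[OF e0] by simp
      finally show ?thesis .
    next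
      case False
      have "(gadj E)\<^sup>*\<^sup>* (Inr j) (Inl undefined)" using conn by blast
      then obtain x where "gadj E (Inr j) x"
        by (metis converse_rtranclpE sum.distinct(2))
      then show ?thesis using False by (cases x) auto
    qed
    ultimately show ?thesis unfolding swss_feasible_def by blast
  qed
  have "swss E mu lamhat theta p = vt0"
    unfolding swss_def
  proof (rule Greatest_equality)
    show "\<exists>kappa. swss_feasible E mu lamhat theta p vt0 kappa" using feas .
  next
    fix vt assume "\<exists>kappa. swss_feasible E mu lamhat theta p vt kappa"
    then show "vt \<le> vt0" using ub by blast
  qed
  then show ?thesis unfolding vt0_def D_def d_def dj_def .
qed


theorem theorem2:
  fixes E :: "'i::finite \<Rightarrow> 'j::finite \<Rightarrow> bool"
    and lamn :: "nat \<Rightarrow> 'i \<Rightarrow> real" and mun :: "nat \<Rightarrow> 'i \<Rightarrow> 'j \<Rightarrow> real" and Nn :: "nat \<Rightarrow> 'j \<Rightarrow> nat"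
    and lam :: "'i \<Rightarrow> real" and nu :: "'j \<Rightarrow> real" and mu :: "'i \<Rightarrow> 'j \<Rightarrow> real"
    and lamhat :: "'i \<Rightarrow> real" and muhat :: "'i \<Rightarrow> 'j \<Rightarrow> real" and nuhat :: "'j \<Rightarrow> real"
    and xistar :: "'i \<Rightarrow> 'j \<Rightarrow> real"
    and p :: "'i \<Rightarrow> real"
  assumes tree: "is_tree E"
    and lamn_pos: "\<And>n i. lamn n i > 0"
    and mun_pos: "\<And>n i j. E i j \<Longrightarrow> mun n i j > 0"
    and lam_pos: "\<And>i. lam i > 0" and nu_pos: "\<And>j. nu j > 0"
    and mu_pos: "\<And>i j. E i j \<Longrightarrow> mu i j > 0"
    and lam_lim: "\<And>i. (\<lambda>n. lamn n i / real n) \<longlonglongrightarrow> lam i"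
    and N_lim: "\<And>j. (\<lambda>n. real (Nn n j) / real n) \<longlonglongrightarrow> nu j"
    and mu_lim: "\<And>i j. E i j \<Longrightarrow> (\<lambda>n. mun n i j) \<longlonglongrightarrow> mu i j"
    and lamhat_lim: "\<And>i. (\<lambda>n. (lamn n i - real n * lam i) / sqrt (real n)) \<longlonglongrightarrow> lamhat i"
    and muhat_lim: "\<And>i j. E i j \<Longrightarrow> (\<lambda>n. sqrt (real n) * (mun n i j - mu i j)) \<longlonglongrightarrow> muhat i j"
    and nuhat_lim: "\<And>j. (\<lambda>n. sqrt (real n) * (real (Nn n j) / real n - nu j)) \<longlonglongrightarrow> nuhat j"
    and crp_opt: "crp_optimal E mu nu lam xistar"
    and crp_unique: "\<And>xi. crp_optimal E mu nu lam xi \<Longrightarrow> xi = xistar"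
    and crp_sum: "\<And>j. (\<Sum>i\<in>UNIV. xistar i j) = 1"
    and crp_pos: "\<And>i j. E i j \<Longrightarrow> xistar i j > 0"
    and p_pos: "\<And>i. p i > 0"
    and p_sum: "(\<Sum>i\<in>UNIV. p i) = 1"
  shows "\<forall>i. swss E mu lamhat
              (\<lambda>j. nuhat j + (\<Sum>i'\<in>{i'. E i' j}. (muhat i' j / mu i' j) * (xistar i' j * nu j))) p
           = ((\<Sum>j\<in>UNIV. gain_cp E mu i j *
                 (nuhat j + (\<Sum>i'\<in>{i'. E i' j}. (muhat i' j / mu i' j) * (xistar i' j * nu j))))
              - (\<Sum>l\<in>UNIV. gain_cc E mu i l * lamhat l))
             / (\<Sum>l\<in>UNIV. gain_cc E mu i l * p l)"
  proof (intro allI)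
  fix i
  show "swss E mu lamhat
              (\<lambda>j. nuhat j + (\<Sum>i'\<in>{i'. E i' j}. (muhat i' j / mu i' j) * (xistar i' j * nu j))) p
           = ((\<Sum>j\<in>UNIV. gain_cp E mu i j *
                 (nuhat j + (\<Sum>i'\<in>{i'. E i' j}. (muhat i' j / mu i' j) * (xistar i' j * nu j))))
              - (\<Sum>l\<in>UNIV. gain_cc E mu i l * lamhat l))
             / (\<Sum>l\<in>UNIV. gain_cc E mu i l * p l)"
    using main_swss[where mu=mu and i=i and lamhat=lamhat and p=p and
        theta="\<lambda>j. nuhat j + (\<Sum>i'\<in>{i'. E i' j}. (muhat i' j / mu i' j) * (xistar i' j * nu j))",
        OF tree mu_pos p_pos] by simp
qed

end
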